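(* Let $\mathbf{p}=(p^{(1)},\dots,p^{(n)})\in(0,1)^n$ with $\sum_ip^{(i)}=1$, and let $f_u(C^{(i)},C^{(j)})=p^{(i)}/(p^{(i)}+p^{(j)})$ for distinct $i,j$. For each $a\in[n]$ define the prefix weights $g_a$ on ordered pairs of distinct classes by $g_a(C^{(a)},C^{(b)})=1$ and $g_a(C^{(b)},C^{(a)})=0$ for $b\ne a$, and $g_a(C^{(b)},C^{(c)})=f_u(C^{(b)},C^{(c)})$ for distinct $b,c\ne a$. Then for all distinct $i,j\in[n]$, $$f_u(C^{(i)},C^{(j)})=\sum_{a=1}^n p^{(a)}\,g_a(C^{(i)},C^{(j)}).$$
   Context: $C^{(1)},\dots,C^{(n)}$ are class labels; $f_u$ are the situational expert graph weights and $g_a$ are the weights of the prefix expert graph with prefix $a$. *)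

theory Defs
  imports Main "HOL.Real"
begin

text \<open>Classes C^(1),...,C^(n) are identified with their indices 1..n.
  Situational expert graph weight: f_u(C_i, C_j) = p_i / (p_i + p_j).\<close>
definition f_u :: "(nat \<Rightarrow> real) \<Rightarrow> nat \<Rightarrow> nat \<Rightarrow> real" where
  "f_u p i j = p i / (p i + p j)"

definition g :: "(nat \<Rightarrow> real) \<Rightarrow> nat \<Rightarrow> nat \<Rightarrow> nat \<Rightarrow> real" where
  "g p a i j = (if i = a then 1 else if j = a then 0 else f_u p i j)"

end

theory Submission
  imports Defs
begin

theorem lemma9:
  fixes n :: nat and p :: "nat \<Rightarrow> real"
  assumes "\<And>i. i \<in> {1..n} \<Longrightarrow> 0 < p i \<and> p i < 1"
    and "(\<Sum>i=1..n. p i) = 1"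
  shows "\<forall>i\<in>{1..n}. \<forall>j\<in>{1..n}. i \<noteq> j \<longrightarrow>
           f_u p i j = (\<Sum>a=1..n. p a * g p a i j)"
proof (intro ballI impI)
  fix i j assume i: "i \<in> {1..n}" and j: "j \<in> {1..n}" and ij: "i \<noteq> j"
  define F where "F = f_u p i j"
  have pi: "p i > 0" and pj: "p j > 0" using assms(1) i j by auto
  let ?R = "{1..n} - {i} - {j}"
  have S1: "{1..n} = insert i (insert j ?R)" using i j by auto
  have fin: "finite ?R" by simp
  have gen: "\<And>h::nat\<Rightarrow>real. (\<Sum>a=1..n. h a) = h i + (h j + (\<Sum>a\<in>?R. h a))"
  proof -
    fix h :: "nat \<Rightarrow> real"
    have "(\<Sum>a=1..n. h a) = (\<Sum>a\<in>insert i (insert j ?R). h a)" using S1 by simp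
    also have "\<dots> = h i + (h j + (\<Sum>a\<in>?R. h a))"
      using ij by (subst sum.insert, simp, simp, subst sum.insert, simp_all)
    finally show "(\<Sum>a=1..n. h a) = h i + (h j + (\<Sum>a\<in>?R. h a))" .
  qed
  have tot: "(\<Sum>a=1..n. p a) = p i + p j + (\<Sum>a\<in>?R. p a)"
    using gen[of p] by simp
  have sumeq: "(\<Sum>a=1..n. p a * g p a i j) = p i + (\<Sum>a\<in>?R. p a * F)"
  proof -
    have "(\<Sum>a=1..n. p a * g p a i j) = p i * g p i i j + (p j * g p j i j + (\<Sum>a\<in>?R. p a * g p a i j))"
      by (rule gen)
    also have "(\<Sum>a\<in>?R. p a * g p a i j) = (\<Sum>a\<in>?R. p a * F)"
      by (rule sum.cong) (auto simp: g_def F_def)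
    finally show ?thesis using ij by (simp add: g_def)
  qed
  have "(\<Sum>a\<in>?R. p a * F) = (1 - p i - p j) * F"
    using tot assms(2) by (simp add: sum_distrib_right[symmetric])
  hence "(\<Sum>a=1..n. p a * g p a i j) = p i + (1 - p i - p j) * F" using sumeq by simp
  also have "\<dots> = F" using pi pj unfolding F_def f_u_def by (simp add: field_simps)
  finally show "f_u p i j = (\<Sum>a=1..n. p a * g p a i j)" by (simp add: F_def)
qed

end
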